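(* Let $\mathcal{A}=\{n\in\mathbb{N}_{\ge1} : V(n+1)/V(n)>1\}$ and $\mathcal{B}=\{n\in\mathbb{N}_{\ge1} : V(n+1)/V(n)<1\}$ (both sets are infinite). Then $$\liminf_{n\to\infty,\ n\in\mathcal{A}}\frac{V(n+1)}{V(n)}=1 \quad\text{and}\quad \limsup_{n\to\infty,\ n\in\mathcal{B}}\frac{V(n+1)}{V(n)}=1.$$
   Context: For a positive integer $n$, an integer $a$ is called regular modulo $n$ if there exists an integer $x$ with $a^2x\equiv a \pmod n$. Let $V(n)$ denote the number of integers $a$ with $1\le a\le n$ that are regular modulo $n$. (Known fact: $V$ is multiplicative, $V(1)=1$, and $V(p^{\alpha})=p^{\alpha}-p^{\alpha-1}+1$ for a prime $p$ and $\alpha\ge1$.) *)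

theory Defs
  imports "HOL-Analysis.Analysis" "HOL-Number_Theory.Cong"
begin

definition regular_mod :: "int \<Rightarrow> nat \<Rightarrow> bool" where
  "regular_mod a n \<longleftrightarrow> (\<exists>x::int. [a^2 * x = a] (mod int n))"

definition V :: "nat \<Rightarrow> nat" where
  "V n = card {a::int. 1 \<le> a \<and> a \<le> int n \<and> regular_mod a n}"

definition setA :: "nat set" where
  "setA = {n. n \<ge> 1 \<and> real (V (n+1)) / real (V n) > 1}"

definition setB :: "nat set" where
  "setB = {n. n \<ge> 1 \<and> real (V (n+1)) / real (V n) < 1}"

end

theory Submission
  imports Defs "HOL-Computational_Algebra.Computational_Algebra"
begin


lemma sqf_int: "squarefree (n::nat) \<Longrightarrow> squarefree (int n)"
proof (rule squarefreeI)
  fix x :: int assume sq: "squarefree n" and "x^2 dvd int n"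
  then have "int ((nat \<bar>x\<bar>)^2) dvd int n" by simp
  then have "(nat \<bar>x\<bar>)^2 dvd n" by (simp only: int_dvd_int_iff)
  then have "nat \<bar>x\<bar> dvd 1" using squarefreeD[OF sq] by blast
  then show "x dvd 1" by simp
qed

lemma sqf_dvd_sq:
  fixes d a :: int
  assumes sq: "squarefree d" and dv: "d dvd a^2"
  shows "d dvd a"
proof -
  have d0: "d \<noteq> 0" using sq by auto
  then have g0: "gcd d a \<noteq> 0" by simp
  obtain d' a' where d: "d = d' * gcd d a" and a: "a = a' * gcd d a" and cop: "coprime d' a'"
    using gcd_coprime_exists[OF g0] by blast
  define g where "g = gcd d a"
  have "d' * g dvd (a' * g) * (a' * g)" using dv d a unfolding g_def by (simp add: power2_eq_square)
  moreover have "(a' * g) * (a' * g) = (a' * (a' * g)) * g" by (simp add: ac_simps)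
  ultimately have "d' * g dvd (a' * (a' * g)) * g" by simp
  then have "d' dvd a' * (a' * g)" using g0 d0 unfolding g_def by auto
  then have "d' dvd a' * g" using cop by (simp add: coprime_dvd_mult_right_iff)
  then have "d' dvd g" using cop by (simp add: coprime_dvd_mult_right_iff)
  then have "d'^2 dvd d' * g" by (simp add: power2_eq_square)
  then have "d'^2 dvd d" using d unfolding g_def by simp
  then have "is_unit d'" using squarefreeD[OF sq] by blast
  then have "d' * g dvd g" using mult_unit_dvd_iff'[of d' g g] by simp
  then have "d dvd gcd d a" using d unfolding g_def by simp
  then show ?thesis using gcd_dvd2 dvd_trans by blast
qed

lemma regular_if: "gcd (a^2) (int n) dvd a \<Longrightarrow> regular_mod a n"
proof -
  assume h: "gcd (a^2) (int n) dvd a"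
  obtain u v where uv: "u * a^2 + v * int n = gcd (a^2) (int n)" using bezout_int by blast
  obtain t where t: "a = gcd (a^2) (int n) * t" using h by blast
  from t uv have "a = (u * a^2 + v * int n) * t" by simp
  then have h: "a = a^2 * (u * t) + int n * (v * t)" by (simp add: algebra_simps)
  have "a^2 * (u*t) - a = - (int n * (v * t))" using h by linarith
  then have "int n dvd a^2 * (u*t) - a" by simp
  then show ?thesis unfolding regular_mod_def by (auto simp: cong_iff_dvd_diff)
qed

lemma regular_sqf: "squarefree n \<Longrightarrow> regular_mod a n"
  apply (rule regular_if)
  apply (rule sqf_dvd_sq)
   apply (rule squarefree_mono[OF _ sqf_int]) apply auto
  done

lemma regular_cop:
  assumes p: "prime p" and m: "squarefree m" and nd: "\<not> int p dvd a"
  shows "regular_mod a (p^2*m)"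
proof (rule regular_if)
  define g where "g = gcd (a^2) (int (p^2*m))"
  have pi: "prime (int p)" using p by simp
  have "coprime (int p) a" using prime_imp_coprime[OF pi nd] .
  then have "coprime (int p) (a^2)" by simp
  then have "coprime (int p) g" unfolding g_def
    using coprime_divisors[OF dvd_refl gcd_dvd1 \<open>coprime (int p) (a^2)\<close>] by simp
  then have "coprime g ((int p)^2)" by (simp add: coprime_commute)
  moreover have "g dvd (int p)^2 * int m" unfolding g_def by simp
  ultimately have "g dvd int m" by (simp add: coprime_dvd_mult_right_iff)
  then have "squarefree g" using squarefree_mono sqf_int[OF m] by blast
  moreover have "g dvd a^2" unfolding g_def by simp
  ultimately show "g dvd a" using sqf_dvd_sq by blast
qed

lemma not_regular:
  assumes p: "prime p" and dn: "int p^2 dvd int n" and pa: "int p dvd a" and r: "regular_mod a n"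
  shows "int p^2 dvd a"
proof -
  obtain x where "[a^2 * x = a] (mod int n)" using r unfolding regular_mod_def by blast
  then have "int n dvd a^2*x - a" by (simp add: cong_iff_dvd_diff)
  then have h1: "int p^2 dvd a^2*x - a" using dn dvd_trans by blast
  have "int p^2 dvd a^2" using pa by (simp add: dvd_power_same)
  then have "int p^2 dvd a^2*x" by simp
  from dvd_diff[OF this h1] show ?thesis by simp
qed



lemma V_sqf: "squarefree n \<Longrightarrow> V n = n"
proof -
  assume s: "squarefree n"
  have "{a::int. 1 \<le> a \<and> a \<le> int n \<and> regular_mod a n} = {1..int n}"
    using regular_sqf[OF s] by auto
  then show ?thesis unfolding V_def by simp
qed

lemma V_upper:
  assumes p: "prime p" "p \<ge> 3" and m: "m \<ge> 1"
  shows "V (p^2*m) \<le> p^2*m - 2"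
proof -
  define n where "n = p^2*m"
  have pn: "p^2 \<le> n" unfolding n_def using m by simp
  have "2*p \<le> p^2" using p by (simp add: power2_eq_square)
  then have p2n: "2*p \<le> n" using pn by linarith
  have sub: "{a::int. 1 \<le> a \<and> a \<le> int n \<and> regular_mod a n} \<subseteq> {1..int n} - {int p, 2*int p}"
  proof
    fix a assume a: "a \<in> {a::int. 1 \<le> a \<and> a \<le> int n \<and> regular_mod a n}"
    have dn: "int p^2 dvd int n" unfolding n_def by simp
    have "a \<noteq> int p"
    proof
      assume "a = int p"
      then have "int p^2 dvd int p" using not_regular[OF p(1) dn] a by auto
      then have "int (p^2) dvd int p" by simp
      then have "p^2 dvd p" by (simp only: int_dvd_int_iff)
      then have "p^2 \<le> p" using p by (simp add: dvd_imp_le)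
      then show False using p by (simp add: power2_eq_square)
    qed
    moreover have "a \<noteq> 2*int p"
    proof
      assume "a = 2*int p"
      then have "int p^2 dvd 2*int p" using not_regular[OF p(1) dn] a by auto
      then have "int (p^2) dvd int (2*p)" by simp
      then have "p^2 dvd 2*p" by (simp only: int_dvd_int_iff)
      then have "p*p dvd 2*p" by (simp add: power2_eq_square)
      then have "p dvd 2" using p by simp
      then have "p \<le> 2" by (simp add: dvd_imp_le)
      then show False using p by simp
    qed
    ultimately show "a \<in> {1..int n} - {int p, 2*int p}" using a by auto
  qed
  have "card ({1..int n} - {int p, 2*int p}) = n - 2"
  proof -
    have "{int p, 2*int p} \<subseteq> {1..int n}" using p2n p by auto
    moreover have "card {int p, 2*int p} = 2" using p by auto
    ultimately show ?thesis by (simp add: card_Diff_subset)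
  qed
  moreover have "V n \<le> card ({1..int n} - {int p, 2*int p})" unfolding V_def
    by (rule card_mono[OF _ sub]) simp
  ultimately have "V n \<le> n - 2" by simp
  then show ?thesis unfolding n_def .
qed

lemma V_lower:
  assumes p: "prime p" and m: "squarefree m"
  shows "V (p^2*m) \<ge> p^2*m - p*m"
proof -
  define n where "n = p^2*m"
  define M where "M = {a\<in>{1..int n}. int p dvd a}"
  have M: "M = (\<lambda>k. int p * k) ` {1..int (p*m)}"
  proof
    show "M \<subseteq> (\<lambda>k. int p * k) ` {1..int (p*m)}"
    proof
      fix a assume "a \<in> M"
      then have a1: "1 \<le> a" "a \<le> int n" "int p dvd a" unfolding M_def by auto
      then obtain k where "a = int p * k" by (elim dvdE)
      then have k: "a = int p * k" "1 \<le> a" "a \<le> int n" using a1 by auto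
      have pp: "int p > 0" using p prime_gt_0_nat by simp
      have "1 \<le> k"
      proof (rule ccontr)
        assume "\<not> 1 \<le> k"
        then have "k \<le> 0" by simp
        then have "int p * k \<le> 0" using pp by (simp add: mult_nonneg_nonpos)
        then show False using k by simp
      qed
      moreover have "int p * k \<le> int p * int (p*m)" using k unfolding n_def by (simp add: power2_eq_square mult.assoc)
      then have "k \<le> int (p*m)" using pp by simp
      ultimately show "a \<in> (\<lambda>k. int p * k) ` {1..int (p*m)}" using k by auto
    qed
  next
    show "(\<lambda>k. int p * k) ` {1..int (p*m)} \<subseteq> M"
    proof
      fix a assume "a \<in> (\<lambda>k. int p * k) ` {1..int (p*m)}"
      then obtain k where k0: "a = int p * k" "k \<in> {1..int (p*m)}" by (rule imageE)
      then have k: "a = int p * k" "1 \<le> k" "k \<le> int (p*m)" by auto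
      have "p \<ge> 1" using prime_gt_0_nat[OF p] by simp
      then have pp: "int p \<ge> 1" by simp
      have "int p * k \<le> int p * int (p*m)" using k pp by simp
      then have "a \<le> int n" using k unfolding n_def by (simp add: power2_eq_square mult.assoc)
      moreover have "1 \<le> a"
      proof -
        have "1*1 \<le> int p * k" by (rule mult_mono) (use k pp in auto)
        then show ?thesis using k by simp
      qed
      ultimately show "a \<in> M" unfolding M_def using k by auto
    qed
  qed
  have pp: "int p \<noteq> 0" using p by simp
  have "card ((\<lambda>k. int p * k) ` {1..int (p*m)}) = card {1..int (p*m)}"
    by (rule card_image) (auto simp: inj_on_def pp)
  then have cM: "card M = p*m" unfolding M by (simp flip: of_nat_mult)
  have sub: "{1..int n} - M \<subseteq> {a::int. 1 \<le> a \<and> a \<le> int n \<and> regular_mod a n}"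
    unfolding M_def n_def using regular_cop[OF p m] by auto
  have fin: "finite {a::int. 1 \<le> a \<and> a \<le> int n \<and> regular_mod a n}"
    by (rule finite_subset[of _ "{1..int n}"]) auto
  have "card ({1..int n} - M) \<le> V n" unfolding V_def by (rule card_mono[OF fin sub])
  moreover have "card ({1..int n} - M) = n - p*m"
  proof -
    have finM: "finite M" unfolding M by simp
    have "M \<subseteq> {1..int n}" unfolding M_def by auto
    then have "card ({1..int n} - M) = card {1..int n} - card M" by (rule card_Diff_subset[OF finM])
    then show ?thesis using cM by simp
  qed
  ultimately show ?thesis unfolding n_def by simp
qed



lemma card_res:
  fixes a c q X :: nat
  assumes q: "0 < q" and cop: "coprime a q"
  shows "card {m\<in>{..<X}. q dvd a*m+c} \<le> X div q + 1"
proof -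
  define S where "S = {m\<in>{..<X}. q dvd a*m+c}"
  have inj: "inj_on (\<lambda>m. m div q) S"
  proof (rule inj_onI)
    fix m m' assume m: "m \<in> S" and m': "m' \<in> S" and e: "m div q = m' div q"
    have h1: "[a*m + c = 0] (mod q)" and h2: "[a*m' + c = 0] (mod q)" using m m' unfolding S_def
      by (auto simp: cong_0_iff)
    have "[a*m + c = a*m' + c] (mod q)" by (rule cong_trans[OF h1 cong_sym[OF h2]])
    then have "[a*m = a*m'] (mod q)" by (simp add: cong_add_rcancel_nat)
    then have "[m = m'] (mod q)" using cong_mult_lcancel_nat[OF cop] by simp
    then have md: "m mod q = m' mod q" by (simp add: cong_def)
    have "m = m div q * q + m mod q" by (rule div_mult_mod_eq[symmetric])
    also have "\<dots> = m' div q * q + m' mod q" using e md by simp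
    also have "\<dots> = m'" by (rule div_mult_mod_eq)
    finally show "m = m'" .
  qed
  have "(\<lambda>m. m div q) ` S \<subseteq> {..X div q}" unfolding S_def
    by (auto intro: div_le_mono)
  then have "card ((\<lambda>m. m div q) ` S) \<le> X div q + 1"
    using card_mono[OF finite_atMost] by fastforce
  then show ?thesis using card_image[OF inj] unfolding S_def by simp
qed

lemma card_sqrt: "real (card {q::nat. q*q \<le> K}) \<le> sqrt K + 1"
proof -
  define s where "s = nat \<lfloor>sqrt K\<rfloor>"
  have "{q::nat. q*q \<le> K} \<subseteq> {..s}"
  proof
    fix q assume "q \<in> {q::nat. q*q \<le> K}"
    then have "real q ^2 \<le> real K" by (simp add: power2_eq_square flip: of_nat_mult)
    then have "real q \<le> sqrt K" by (rule real_le_rsqrt)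
    then show "q \<in> {..s}" unfolding s_def by (simp add: le_nat_floor)
  qed
  then have "card {q::nat. q*q \<le> K} \<le> s + 1" using card_mono[OF finite_atMost] by fastforce
  moreover have "real s \<le> sqrt K" unfolding s_def by simp
  ultimately show ?thesis by linarith
qed

lemma oddsum: "j \<ge> 1 \<Longrightarrow> (\<Sum>i\<in>{1..j}. 1/(real(2*i+1))^2) \<le> 17/72 - 1/(4*(real j+1))"
proof (induction j rule: dec_induct)
  case base
  then show ?case by simp
next
  case (step j)
  have "1/(real(2*(Suc j)+1))^2 \<le> 1/(4*(real j+1)) - 1/(4*(real (Suc j)+1))"
  proof -
    have h1: "real j + 1 > 0" "real j + 2 > 0" by simp_all
    have e: "1/(4*(real j+1)) - 1/(4*(real (Suc j)+1)) = 1/(4*(real j+1)*(real j+2))"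
      using h1 by (simp add: divide_simps)
    have "4*(real j+1)*(real j+2) \<le> (real(2*(Suc j)+1))^2"
      by (simp add: power2_eq_square algebra_simps)
    then show ?thesis unfolding e
      by (intro divide_left_mono) auto
  qed
  then show ?case using step by simp
qed

lemma oddsum': "(\<Sum>i\<in>{1..j}. 1/(real(2*i+1))^2) \<le> 17/72"
proof (cases "j \<ge> 1")
  case True
  have "0 \<le> 1/(4*(real j+1))" by simp
  then show ?thesis using oddsum[OF True] by linarith
next
  case False
  then show ?thesis by simp
qed

lemma sum_primes:
  assumes fin: "finite P" and pr: "\<forall>q\<in>P. prime (q::nat)"
  shows "(\<Sum>q\<in>P. 1/(real q)^2) \<le> 35/72"
proof -
  obtain M where M: "\<forall>q\<in>P. q \<le> M" using fin finite_nat_set_iff_bounded_le by blast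
  define g where "g = (\<lambda>i::nat. 2*i+1)"
  have sub: "P \<subseteq> insert 2 (g ` {1..M})"
  proof
    fix q assume q: "q \<in> P"
    show "q \<in> insert 2 (g ` {1..M})"
    proof (cases "q = 2")
      case False
      have q2: "q > 2" using prime_ge_2_nat[of q] pr q False by auto
      then have "odd q" using pr q prime_odd_nat by blast
      then obtain i where i: "q = 2*i+1" by (rule oddE)
      have "i \<ge> 1" using q2 i by simp
      moreover have "i \<le> M" using M q i by auto
      ultimately show ?thesis unfolding g_def using i by auto
    qed simp
  qed
  have "(\<Sum>q\<in>P. 1/(real q)^2) \<le> (\<Sum>q\<in>insert 2 (g ` {1..M}). 1/(real q)^2)"
    by (rule sum_mono2[OF _ sub]) auto
  also have "\<dots> = 1/4 + (\<Sum>q\<in>g ` {1..M}. 1/(real q)^2)"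
    by (subst sum.insert) (auto simp: g_def)
  also have "(\<Sum>q\<in>g ` {1..M}. 1/(real q)^2) = (\<Sum>i\<in>{1..M}. 1/(real (2*i+1))^2)"
    by (subst sum.reindex) (auto simp: inj_on_def g_def)
  finally show ?thesis using oddsum'[of M] by linarith
qed

lemma card_bad:
  fixes a c X :: nat
  assumes c: "c \<ge> 1" and cop: "coprime a c"
  shows "real (card {m\<in>{..<X}. \<not> squarefree (a*m+c)}) \<le> 35/72 * X + sqrt (a*X+c) + 1"
proof -
  define K where "K = a*X+c"
  define P where "P = {q::nat. prime q \<and> q*q \<le> K}"
  define S where "S = (\<lambda>q::nat. {m\<in>{..<X}. q^2 dvd a*m+c})"
  have finP: "finite P" unfolding P_def
    by (rule finite_subset[of _ "{..K}"]) (auto intro: order.trans[OF le_square])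
  have sub: "{m\<in>{..<X}. \<not> squarefree (a*m+c)} \<subseteq> (\<Union>q\<in>P. S q)"
  proof
    fix m assume m: "m \<in> {m\<in>{..<X}. \<not> squarefree (a*m+c)}"
    have ne: "a*m+c \<noteq> 0" using c by simp
    then obtain q where q: "prime q" "q^2 dvd a*m+c"
      using m squarefree_factorial_semiring[OF ne] by auto
    have "q*q \<le> a*m+c" using q ne by (simp add: dvd_imp_le power2_eq_square)
    also have "\<dots> \<le> K" unfolding K_def using m by auto
    finally have "q \<in> P" unfolding P_def using q by simp
    then show "m \<in> (\<Union>q\<in>P. S q)" unfolding S_def using m q by auto
  qed
  have cS: "real (card (S q)) \<le> real X / (real q)^2 + 1" if qP: "q \<in> P" for q
  proof (cases "S q = {}")
    case True then show ?thesis by simp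
  next
    case False
    then obtain m where m: "m \<in> S q" by blast
    have pq: "prime q" using qP unfolding P_def by simp
    have "coprime a q"
    proof (rule ccontr)
      assume "\<not> coprime a q"
      have "q dvd a"
      proof (rule ccontr)
        assume "\<not> q dvd a"
        then have "coprime q a" by (rule prime_imp_coprime[OF pq])
        then show False using \<open>\<not> coprime a q\<close> by (simp add: coprime_commute)
      qed
      moreover have "q dvd q^2" by (simp add: power2_eq_square)
      moreover have "q^2 dvd a*m+c" using m unfolding S_def by simp
      ultimately have "q dvd a*m" "q dvd a*m+c" using dvd_trans by auto
      then have "q dvd c" using dvd_add_right_iff by blast
      then have "is_unit q" using coprime_common_divisor[OF cop \<open>q dvd a\<close>] by blast
      then show False using pq by simp
    qed
    then have "coprime a (q^2)" by simp
    then have "card (S q) \<le> X div q^2 + 1" unfolding S_def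
      using card_res[of "q^2" a X c] pq by (simp add: prime_gt_0_nat)
    then have "real (card (S q)) \<le> real (X div q^2) + 1" by linarith
    also have "real (X div q^2) \<le> real X / (real q)^2"
      using of_nat_div_le_of_nat[of X "q^2"] by simp
    finally show ?thesis by simp
  qed
  have "card {m\<in>{..<X}. \<not> squarefree (a*m+c)} \<le> card (\<Union>q\<in>P. S q)"
    by (rule card_mono[OF _ sub]) (auto simp: S_def finP)
  also have "\<dots> \<le> (\<Sum>q\<in>P. card (S q))" by (rule card_UN_le[OF finP])
  finally have "real (card {m\<in>{..<X}. \<not> squarefree (a*m+c)}) \<le> (\<Sum>q\<in>P. real (card (S q)))"
    by (simp only: of_nat_sum[symmetric] of_nat_le_iff)
  also have "\<dots> \<le> (\<Sum>q\<in>P. real X / (real q)^2 + 1)" by (rule sum_mono) (use cS in auto)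
  also have "\<dots> = real X * (\<Sum>q\<in>P. 1/(real q)^2) + real (card P)"
    by (simp add: sum.distrib sum_distrib_left)
  also have "real X * (\<Sum>q\<in>P. 1/(real q)^2) \<le> real X * (35/72)"
    by (rule mult_left_mono) (use sum_primes[OF finP] P_def in auto)
  also have "real (card P) \<le> sqrt K + 1"
  proof -
    have "card P \<le> card {q::nat. q*q \<le> K}"
      by (rule card_mono) (auto simp: P_def intro: finite_subset[of _ "{..K}"] order.trans[OF le_square])
    then show ?thesis using card_sqrt[of K] by linarith
  qed
  finally show ?thesis unfolding K_def by simp
qed



lemma exists_K:
  fixes A B c :: real
  assumes "c > 0"
  shows "\<exists>K::nat. K \<ge> 1 \<and> A + B*K < c*(real K)^2"
proof -
  define K where "K = nat \<lceil>(\<bar>A\<bar>+\<bar>B\<bar>+1)/c\<rceil> + 1"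
  have K1: "K \<ge> 1" unfolding K_def by simp
  have "(\<bar>A\<bar>+\<bar>B\<bar>+1)/c \<le> real K" unfolding K_def by linarith
  then have h: "\<bar>A\<bar>+\<bar>B\<bar>+1 \<le> c * real K" using assms by (simp add: divide_le_eq mult.commute)
  have h2: "(\<bar>A\<bar>+\<bar>B\<bar>+1) * real K \<le> c * (real K * real K)"
    using mult_right_mono[OF h, of "real K"] by (simp add: mult.assoc)
  have h3: "A + B*K < (\<bar>A\<bar>+\<bar>B\<bar>+1) * real K"
  proof -
    have "\<bar>A\<bar> * 1 \<le> \<bar>A\<bar> * real K" by (rule mult_left_mono) (use K1 in auto)
    then have hA: "A \<le> \<bar>A\<bar> * real K" by linarith
    have hB: "B * real K \<le> \<bar>B\<bar> * real K" by (rule mult_right_mono) auto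
    have hK: "0 < real K" using K1 by simp
    have ee: "(\<bar>A\<bar>+\<bar>B\<bar>+1) * real K = \<bar>A\<bar> * real K + \<bar>B\<bar> * real K + real K"
      by (simp add: algebra_simps)
    show ?thesis unfolding ee using hA hB hK by linarith
  qed
  have "A + B*real K < c*(real K)^2" unfolding power2_eq_square using h2 h3 by linarith
  then show ?thesis using K1 by blast
qed

lemma sqrt_bound: "K \<ge> 1 \<Longrightarrow> sqrt (real (K^2) + 2) \<le> real K + 1"
proof -
  assume K: "K \<ge> 1"
  have "real (K^2) + 2 \<le> (real K + 1)^2" using K by (simp add: power2_eq_square algebra_simps)
  then show ?thesis by (intro real_le_lsqrt) auto
qed

lemma card_good:
  fixes X N :: nat and B1 B2 :: "nat set"
  assumes "B1 \<subseteq> {..<X}" "B2 \<subseteq> {..<X}" and "real (card B1) + real (card B2) + N < X"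
  shows "\<exists>m<X. m \<ge> N \<and> m \<notin> B1 \<and> m \<notin> B2"
proof (rule ccontr)
  assume H: "\<not> (\<exists>m<X. m \<ge> N \<and> m \<notin> B1 \<and> m \<notin> B2)"
  have "{..<X} \<subseteq> B1 \<union> B2 \<union> {..<N}"
  proof
    fix x assume x: "x \<in> {..<X}"
    show "x \<in> B1 \<union> B2 \<union> {..<N}"
    proof (cases "x < N")
      case False
      then have "N \<le> x" by simp
      then show ?thesis using H x by auto
    qed simp
  qed
  then have "card {..<X} \<le> card (B1 \<union> B2 \<union> {..<N})"
    using assms(1,2) by (intro card_mono) (auto intro: finite_subset)
  also have "\<dots> \<le> card B1 + card B2 + card {..<N}"
    using card_Un_le[of "B1 \<union> B2" "{..<N}"] card_Un_le[of B1 B2] by linarith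
  finally have "X \<le> card B1 + card B2 + N" by simp
  then show False using assms(3) by linarith
qed

lemma exA: "\<exists>n\<ge>(N::nat). squarefree n \<and> squarefree (n+1)"
proof -
  obtain K :: nat where K: "K \<ge> 1" "real (4+N) + 2*K < (1/36)*(real K)^2"
    using exists_K[of "1/36" "real (4+N)" 2] by auto
  define X where "X = K^2"
  define B1 where "B1 = {m\<in>{..<X}. \<not> squarefree (1*m+1)}"
  define B2 where "B2 = {m\<in>{..<X}. \<not> squarefree (1*m+2)}"
  have c1: "real (card B1) \<le> 35/72 * X + sqrt (1*X+1) + 1" unfolding B1_def
    by (rule card_bad) auto
  have c2: "real (card B2) \<le> 35/72 * X + sqrt (1*X+2) + 1" unfolding B2_def
    by (rule card_bad) auto
  have s1: "sqrt (1*X+1) \<le> real K + 1"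
    unfolding X_def by (intro real_le_lsqrt) (auto simp: power2_eq_square algebra_simps)
  have s2: "sqrt (1*X+2) \<le> real K + 1"
    using K(1) unfolding X_def by (intro real_le_lsqrt) (auto simp: power2_eq_square algebra_simps)
  have "real (card B1) + real (card B2) + N < X"
    using c1 c2 s1 s2 K unfolding X_def by (simp add: power2_eq_square)
  then obtain m where m: "m < X" "m \<ge> N" "m \<notin> B1" "m \<notin> B2"
    using card_good[of B1 X B2 N] unfolding B1_def B2_def by auto
  then have "squarefree (m+1)" "squarefree (m+2)" unfolding B1_def B2_def by auto
  then show ?thesis using m by (intro exI[of _ "m+1"]) auto
qed

lemma exB:
  assumes p: "prime (p::nat)" "p \<ge> 3"
  shows "\<exists>m\<ge>(N::nat). m \<ge> 1 \<and> squarefree m \<and> squarefree (p^2*m - 1)"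
proof -
  obtain K :: nat where K: "K \<ge> 1" "real (p+3+N) + (real p+1)*K < (1/36)*(real K)^2"
    using exists_K[of "1/36" "real (p+3+N)" "real p+1"] by auto
  define X where "X = K^2"
  define B1 where "B1 = {m\<in>{..<X}. \<not> squarefree (1*m+1)}"
  define B2 where "B2 = {m\<in>{..<X}. \<not> squarefree (p^2*m+(p^2-1))}"
  have p2: "p^2 \<ge> 9"
  proof -
    have "3*3 \<le> p*p" using p by (intro mult_le_mono) auto
    then show ?thesis by (simp add: power2_eq_square)
  qed
  have c1: "real (card B1) \<le> 35/72 * X + sqrt (1*X+1) + 1" unfolding B1_def
    by (rule card_bad) auto
  have c2: "real (card B2) \<le> 35/72 * X + sqrt (p^2*X+(p^2-1)) + 1"
  proof -
    have cop: "coprime (p^2) (p^2-1)" by (rule coprime_diff_one_right_nat) (use p in simp)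
    show ?thesis unfolding B2_def by (rule card_bad[OF _ cop]) (use p2 in simp)
  qed
  have s1: "sqrt (1*X+1) \<le> real K + 1"
    unfolding X_def by (intro real_le_lsqrt) (auto simp: power2_eq_square algebra_simps)
  have s2: "sqrt (p^2*X+(p^2-1)) \<le> real p * (real K + 1)"
  proof -
    have le1: "p^2*X+(p^2-1) \<le> p^2*(X+1)" by (simp add: distrib_left)
    then have "real (p^2*X+(p^2-1)) \<le> real (p^2*(X+1))" by (simp only: of_nat_le_iff)
    also have "real (p^2*(X+1)) = (real p)^2*((real K)^2+1)" unfolding X_def by (simp add: algebra_simps)
    also have "\<dots> \<le> (real p * (real K + 1))^2"
    proof -
      have e: "(real p * (real K + 1))^2 = (real p)^2*((real K)^2+1) + 2*((real p)^2*real K)"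
        by (simp add: power2_eq_square algebra_simps)
      have "0 \<le> (real p)^2*real K" by simp
      then show ?thesis unfolding e by linarith
    qed
    finally have "real (p^2*X+(p^2-1)) \<le> (real p * (real K + 1))^2" .
    then show ?thesis by (intro real_le_lsqrt) auto
  qed
  have "real (card B1) + real (card B2) + N < X"
    using c1 c2 s1 s2 K unfolding X_def by (simp add: power2_eq_square algebra_simps)
  then obtain m where m: "m < X" "m \<ge> N" "m \<notin> B1" "m \<notin> B2"
    using card_good[of B1 X B2 N] unfolding B1_def B2_def by auto
  then have "squarefree (m+1)" "squarefree (p^2*m+(p^2-1))" unfolding B1_def B2_def by auto
  moreover have "p^2*(m+1) - 1 = p^2*m+(p^2-1)" using p2 by simp
  ultimately show ?thesis using m by (intro exI[of _ "m+1"]) auto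
qed

lemma inv_lt:
  fixes e x :: real
  assumes e: "0 < e" and x: "1/e < x"
  shows "1/x < e"
proof -
  have x0: "0 < x" using x e by (meson less_trans zero_less_divide_1_iff)
  have "1 < x * e" using x e by (simp add: divide_less_eq)
  then show ?thesis using x0 by (simp add: divide_less_eq mult.commute)
qed

lemma ratioA:
  assumes "squarefree n" "squarefree (n+1)"
  shows "real (V (n+1)) / real (V n) = 1 + 1/real n" "n \<in> setA"
proof -
  have n: "n \<ge> 1" using assms(1) by (cases n) auto
  show e: "real (V (n+1)) / real (V n) = 1 + 1/real n"
    using V_sqf[OF assms(1)] V_sqf[OF assms(2)] n by (simp add: field_simps)
  show "n \<in> setA" unfolding setA_def using e n by simp
qed

lemma ratioB:
  assumes p: "prime p" "p \<ge> 3" and m: "m \<ge> 1" "squarefree m" and s: "squarefree (p^2*m - 1)"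
  shows "real (V (p^2*m - 1 + 1)) / real (V (p^2*m - 1)) \<ge> 1 - 1/real p" "p^2*m - 1 \<in> setB"
proof -
  define n where "n = p^2*m - 1"
  have p2: "p^2 \<ge> 9"
  proof -
    have "3*3 \<le> p*p" using p by (intro mult_le_mono) auto
    then show ?thesis by (simp add: power2_eq_square)
  qed
  have pm: "p^2*m \<ge> 9" using mult_le_mono[OF p2 m(1)] by simp
  have n1: "n + 1 = p^2*m" unfolding n_def using pm by simp
  have Vn: "V n = n" using V_sqf[OF s] unfolding n_def .
  have up: "V (n+1) \<le> n - 1" using V_upper[OF p m(1)] n1 by simp
  have lo: "V (n+1) \<ge> p^2*m - p*m" using V_lower[OF p(1) m(2)] n1 by simp
  have n8: "n \<ge> 8" using pm n1 by simp
  have "real (V (n+1)) < real n" using up n8 by linarith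
  then have "real (V (n+1)) / real (V n) < 1" using Vn n8 by simp
  then show "p^2*m - 1 \<in> setB" unfolding setB_def n_def[symmetric] using n8 by simp
  have pmle: "p*m \<le> p^2*m" by (simp add: power2_eq_square)
  have pos: "real p > 0" using p by simp
  have ed: "real (p^2*m - p*m) = real (p^2*m) - real (p*m)" by (rule of_nat_diff[OF pmle])
  have "real (p^2*m - p*m) \<le> real (V (n+1))" by (simp only: of_nat_le_iff lo)
  then have a1: "real (V (n+1)) \<ge> real (p^2*m) - real (p*m)" using ed by linarith
  have a2: "real n \<le> real (p^2*m)" using n1 by linarith
  have a3: "real n > 0" using n8 by simp
  have "real (V (n+1)) / real (V n) \<ge> (real (p^2*m) - real (p*m)) / real (p^2*m)"
    unfolding Vn
  proof -
    have "real (p*m) \<le> real (p^2*m)" using pmle by (simp only: of_nat_le_iff)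
    then have nn: "0 \<le> real (p^2*m) - real (p*m)" by linarith
    have "(real (p^2*m) - real (p*m)) / real (p^2*m) \<le> (real (p^2*m) - real (p*m)) / real n"
      by (rule divide_left_mono[OF a2 nn]) (use a2 a3 in \<open>intro mult_pos_pos; linarith\<close>)
    also have "\<dots> \<le> real (V (n+1)) / real n" by (rule divide_right_mono[OF a1]) (use a3 in simp)
    finally show "(real (p^2*m) - real (p*m)) / real (p^2*m) \<le> real (V (n+1)) / real n" .
  qed
  also have "(real (p^2*m) - real (p*m)) / real (p^2*m) = 1 - 1/real p"
    using pos m by (simp add: field_simps power2_eq_square)
  finally show "real (V (p^2*m - 1 + 1)) / real (V (p^2*m - 1)) \<ge> 1 - 1/real p" unfolding n_def .
qed

lemma setB_unbounded: "\<exists>n\<ge>(N::nat). n \<in> setB"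
proof -
  obtain p :: nat where p: "prime p" "p > 2" using bigger_prime by blast
  have p3: "p \<ge> 3" using p by simp
  obtain m where m: "m \<ge> N" "m \<ge> 1" "squarefree m" "squarefree (p^2*m - 1)"
    using exB[OF p(1) p3] by blast
  have "p^2*m - 1 \<ge> N"
  proof -
    have "3*3 \<le> p*p" using p3 by (intro mult_le_mono) auto
    then have "9*m \<le> p^2*m" by (simp add: power2_eq_square)
    then show ?thesis using m(1,2) by linarith
  qed
  moreover have "p^2*m - 1 \<in> setB" by (rule ratioB(2)[OF p(1) p3 m(2,3,4)])
  ultimately show ?thesis by blast
qed

lemma setA_unbounded: "\<exists>n\<ge>(N::nat). n \<in> setA"
proof -
  obtain n where n: "n \<ge> N" "squarefree n" "squarefree (n+1)" using exA by blast
  then show ?thesis using ratioA(2)[OF n(2,3)] by blast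
qed

theorem proposition2:
  shows "infinite setA \<and> infinite setB \<and>
    Liminf (inf sequentially (principal setA)) (\<lambda>n. ereal (real (V (n+1)) / real (V n))) = 1 \<and>
    Limsup (inf sequentially (principal setB)) (\<lambda>n. ereal (real (V (n+1)) / real (V n))) = 1"
proof -
  define f where "f = (\<lambda>n. ereal (real (V (n+1)) / real (V n)))"
  define FA where "FA = inf sequentially (principal setA)"
  define FB where "FB = inf sequentially (principal setB)"
  have IA: "infinite setA" unfolding infinite_nat_iff_unbounded_le
    using setA_unbounded by blast
  have IB: "infinite setB" unfolding infinite_nat_iff_unbounded_le
    using setB_unbounded by blast
  have LA: "Liminf FA f = 1"
  proof (rule antisym)
    show "1 \<le> Liminf FA f" unfolding FA_def
      by (rule Liminf_bounded) (auto simp: eventually_inf_principal setA_def f_def)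
    show "Liminf FA f \<le> 1"
    proof (rule ccontr)
      assume "\<not> Liminf FA f \<le> 1"
      then have "1 < Liminf FA f" by simp
      then obtain y where y: "1 < y" "y < Liminf FA f" using dense by blast
      have "\<forall>y<Liminf FA f. eventually (\<lambda>x. y < f x) FA"
        using le_Liminf_iff[where C="Liminf FA f" and F=FA and X=f] by simp
      then have "eventually (\<lambda>x. y < f x) FA" using y(2) by blast
      then obtain N where N: "\<forall>n\<ge>N. n \<in> setA \<longrightarrow> y < f n"
        unfolding FA_def eventually_inf_principal eventually_sequentially by blast
      obtain r where r: "y = ereal r" using y by (cases y) auto
      have r1: "r > 1" using y r by simp
      obtain n where n: "n \<ge> max N (nat \<lceil>1/(r-1)\<rceil> + 1)" "squarefree n" "squarefree (n+1)"
        using exA by blast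
      have "real n > 1/(r-1)" using n(1) by linarith
      then have "1/real n < r - 1" using inv_lt[of "r-1" "real n"] r1 by simp
      then have "f n < y" using ratioA(1)[OF n(2,3)] r unfolding f_def by simp
      moreover have "y < f n" using N n(1) ratioA(2)[OF n(2,3)] by simp
      ultimately show False by simp
    qed
  qed
  have LB: "Limsup FB f = 1"
  proof (rule antisym)
    show "Limsup FB f \<le> 1" unfolding FB_def
      by (rule Limsup_bounded) (auto simp: eventually_inf_principal setB_def f_def)
    show "1 \<le> Limsup FB f"
    proof (rule ccontr)
      assume "\<not> 1 \<le> Limsup FB f"
      then have "Limsup FB f < 1" by simp
      then obtain y where y: "Limsup FB f < y" "y < 1" using dense by blast
      have "\<forall>y>Limsup FB f. eventually (\<lambda>x. y > f x) FB"
        using Limsup_le_iff[where C="Limsup FB f" and F=FB and X=f] by simp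
      then have "eventually (\<lambda>x. y > f x) FB" using y(1) by blast
      then obtain N where N: "\<forall>n\<ge>N. n \<in> setB \<longrightarrow> y > f n"
        unfolding FB_def eventually_inf_principal eventually_sequentially by blast
      have yb: "y \<noteq> -\<infinity>"
      proof -
        obtain n where "n \<ge> N" "n \<in> setB" using setB_unbounded by blast
        then have "y > f n" using N by blast
        then show ?thesis by auto
      qed
      obtain r where r: "y = ereal r" using y yb by (cases y) auto
      have r1: "r < 1" using y r by simp
      obtain p where p: "prime p" "p > max 3 (nat \<lceil>1/(1-r)\<rceil>)" using bigger_prime by blast
      have p3: "p \<ge> 3" using p by simp
      have "real p > 1/(1-r)" using p(2) by linarith
      then have pr: "1/real p < 1 - r" using inv_lt[of "1-r" "real p"] r1 by simp
      obtain m where m: "m \<ge> N" "m \<ge> 1" "squarefree m" "squarefree (p^2*m - 1)"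
        using exB[OF p(1) p3] by blast
      have "p^2*m - 1 \<ge> N"
      proof -
        have "3*3 \<le> p*p" using p3 by (intro mult_le_mono) auto
        then have "9*m \<le> p^2*m" by (simp add: power2_eq_square)
        then show ?thesis using m(1,2) by linarith
      qed
      then have "y > f (p^2*m - 1)" using N ratioB(2)[OF p(1) p3 m(2,3,4)] by blast
      moreover have "f (p^2*m - 1) > y"
      proof -
        have "real (V (p^2*m - 1 + 1)) / real (V (p^2*m - 1)) > r"
          using ratioB(1)[OF p(1) p3 m(2,3,4)] pr by linarith
        then show ?thesis unfolding f_def r by simp
      qed
      ultimately show False by simp
    qed
  qed
  show ?thesis using IA IB LA LB unfolding FA_def FB_def f_def by blast
qed

end
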